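(* Let $W\subset\mathbb{R}$ have no isolated points and satisfy $0\in W$. Let $\Psi:\mathbb{R}\to\mathbb{R}$ be $C^\infty$ on some open interval $I$ and not equal to a polynomial on $I$. Then for each integer $n\ge0$ the function $x\mapsto x^n$ can be approximated uniformly on every compact subset of $\mathbb{R}$ by elements of $\mathcal{N}_1(\Psi,W,I)=\mathrm{span}\{x\mapsto\Psi(wx+b):w\in W,\ b\in I\}$. In particular, $\mathcal{N}_1(\Psi,W,I)$ is dense in $C(\mathbb{R})$ in the sense of uniform convergence on compact sets.
   Context: A set $S$ of functions $\mathbb{R}\to\mathbb{R}$ is dense in $C(\mathbb{R})$ in the sense of uniform convergence on compact sets if for every nonempty compact $K\subset\mathbb{R}$, every $g\in C(\mathbb{R})$ and every $\varepsilon>0$ there is $s\in S$ with $\sup_{x\in K}|s(x)-g(x)|<\varepsilon$. "$W$ has no isolated points" means every point of $W$ is a limit of points of $W\setminus\{w\}$. *)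

theory Defs
  imports "HOL-Analysis.Analysis" "HOL-Computational_Algebra.Polynomial"
begin

definition smooth_on :: "real set \<Rightarrow> (real \<Rightarrow> real) \<Rightarrow> bool" where
  "smooth_on I f \<longleftrightarrow> (\<forall>k::nat. \<forall>x\<in>I. ((deriv ^^ k) f) differentiable (at x))"

definition polynomial_on :: "real set \<Rightarrow> (real \<Rightarrow> real) \<Rightarrow> bool" where
  "polynomial_on I f \<longleftrightarrow> (\<exists>p :: real poly. \<forall>x\<in>I. f x = poly p x)"

definition N1 :: "(real \<Rightarrow> real) \<Rightarrow> real set \<Rightarrow> real set \<Rightarrow> (real \<Rightarrow> real) set" where
  "N1 \<Psi> W I = {f. \<exists>(n::nat) (c::nat \<Rightarrow> real) (w::nat \<Rightarrow> real) (b::nat \<Rightarrow> real).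
      (\<forall>i<n. w i \<in> W \<and> b i \<in> I) \<and> f = (\<lambda>x. \<Sum>i<n. c i * \<Psi> (w i * x + b i))}"

text \<open>sup over K of |s - g| is < e (sup bounded by some d < e).\<close>
definition unif_close_on :: "real set \<Rightarrow> (real \<Rightarrow> real) \<Rightarrow> (real \<Rightarrow> real) \<Rightarrow> real \<Rightarrow> bool" where
  "unif_close_on K s g e \<longleftrightarrow> (\<exists>d<e. \<forall>x\<in>K. \<bar>s x - g x\<bar> \<le> d)"

end

theory Submission imports Defs begin

lemma sum_lessThan_add_split:
  "(\<Sum>i<n+(m::nat). F i) = (\<Sum>i<n. F i) + (\<Sum>i<m. (F (n+i)::real))"
  by (induction m) (simp_all add: add.assoc)

lemma N1_const_mult:
  assumes "f \<in> N1 \<Psi> W I" shows "(\<lambda>x. a * f x) \<in> N1 \<Psi> W I"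
proof -
  from assms obtain n :: nat and c w b where h: "\<forall>i<n. w i \<in> W \<and> b i \<in> I"
    and f: "f = (\<lambda>x. \<Sum>i<n. c i * \<Psi> (w i * x + b i))" unfolding N1_def by blast
  show ?thesis unfolding N1_def
    by (rule CollectI, rule exI[of _ n], rule exI[of _ "\<lambda>i. a * c i"], rule exI[of _ w], rule exI[of _ b])
       (auto simp: h f sum_distrib_left mult.assoc)
qed

lemma N1_add:
  assumes "f \<in> N1 \<Psi> W I" "g \<in> N1 \<Psi> W I" shows "(\<lambda>x. f x + g x) \<in> N1 \<Psi> W I"
proof -
  from assms(1) obtain n :: nat and c w b where h: "\<forall>i<n. w i \<in> W \<and> b i \<in> I"
    and f: "f = (\<lambda>x. \<Sum>i<n. c i * \<Psi> (w i * x + b i))" unfolding N1_def by blast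
  from assms(2) obtain m :: nat and c' w' b' where h': "\<forall>i<m. w' i \<in> W \<and> b' i \<in> I"
    and g: "g = (\<lambda>x. \<Sum>i<m. c' i * \<Psi> (w' i * x + b' i))" unfolding N1_def by blast
  define C where "C = (\<lambda>i. if i < n then c i else c' (i - n))"
  define V where "V = (\<lambda>i. if i < n then w i else w' (i - n))"
  define B where "B = (\<lambda>i. if i < n then b i else b' (i - n))"
  have "\<forall>i<n+m. V i \<in> W \<and> B i \<in> I" using h h' by (auto simp: V_def B_def)
  moreover have "(\<lambda>x. f x + g x) = (\<lambda>x. \<Sum>i<n+m. C i * \<Psi> (V i * x + B i))"
  proof
    fix x
    have "(\<Sum>i<n+m. C i * \<Psi> (V i * x + B i)) = (\<Sum>i<n. C i * \<Psi> (V i * x + B i)) + (\<Sum>i<m. C (n+i) * \<Psi> (V (n+i) * x + B (n+i)))"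
      by (rule sum_lessThan_add_split)
    also have "\<dots> = f x + g x" by (simp add: f g C_def V_def B_def)
    finally show "f x + g x = (\<Sum>i<n+m. C i * \<Psi> (V i * x + B i))" by simp
  qed
  ultimately show ?thesis unfolding N1_def by blast
qed

definition approx :: "(real \<Rightarrow> real) \<Rightarrow> real set \<Rightarrow> real set \<Rightarrow> real set \<Rightarrow> (real \<Rightarrow> real) \<Rightarrow> bool" where
  "approx \<Psi> W I K f \<longleftrightarrow> (\<forall>e>0. \<exists>s\<in>N1 \<Psi> W I. \<forall>x\<in>K. \<bar>s x - f x\<bar> \<le> e)"

lemma N1_zero: "(\<lambda>x. 0) \<in> N1 \<Psi> W I"
  unfolding N1_def by (rule CollectI, rule exI[of _ 0]) simp

lemma approx_N1: "s \<in> N1 \<Psi> W I \<Longrightarrow> approx \<Psi> W I K s"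
  unfolding approx_def by (intro allI impI bexI[of _ s]) auto

lemma approx_lin:
  assumes f: "approx \<Psi> W I K f" and g: "approx \<Psi> W I K g"
  shows "approx \<Psi> W I K (\<lambda>x. a * f x + c * g x)"
  unfolding approx_def
proof (intro allI impI)
  fix e :: real assume e: "e > 0"
  define e' where "e' = e / (\<bar>a\<bar> + \<bar>c\<bar> + 1)"
  have e': "e' > 0" using e by (simp add: e'_def add_pos_nonneg)
  obtain s1 where s1: "s1 \<in> N1 \<Psi> W I" "\<forall>x\<in>K. \<bar>s1 x - f x\<bar> \<le> e'"
    using f e' unfolding approx_def by blast
  obtain s2 where s2: "s2 \<in> N1 \<Psi> W I" "\<forall>x\<in>K. \<bar>s2 x - g x\<bar> \<le> e'"
    using g e' unfolding approx_def by blast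
  have N: "(\<lambda>x. a * s1 x + c * s2 x) \<in> N1 \<Psi> W I"
    by (intro N1_add N1_const_mult s1(1) s2(1))
  have B: "\<bar>(a * s1 x + c * s2 x) - (a * f x + c * g x)\<bar> \<le> e" if x: "x \<in> K" for x
  proof -
    have "\<bar>(a * s1 x + c * s2 x) - (a * f x + c * g x)\<bar> = \<bar>a * (s1 x - f x) + c * (s2 x - g x)\<bar>"
      by (simp add: algebra_simps)
    also have "\<dots> \<le> \<bar>a\<bar> * \<bar>s1 x - f x\<bar> + \<bar>c\<bar> * \<bar>s2 x - g x\<bar>"
      by (metis abs_mult abs_triangle_ineq)
    also have "\<dots> \<le> \<bar>a\<bar> * e' + \<bar>c\<bar> * e'"
      using s1(2) s2(2) x by (intro add_mono mult_left_mono) auto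
    also have "\<dots> \<le> (\<bar>a\<bar> + \<bar>c\<bar> + 1) * e'" using e' by (simp add: algebra_simps)
    also have "\<dots> = e" unfolding e'_def by (simp add: add_pos_nonneg)
    finally show ?thesis .
  qed
  show "\<exists>s\<in>N1 \<Psi> W I. \<forall>x\<in>K. \<bar>s x - (a * f x + c * g x)\<bar> \<le> e"
    using N B by (intro bexI[of _ "\<lambda>x. a * s1 x + c * s2 x"]) auto
qed

lemma approx_limit:
  assumes "\<And>e. e > 0 \<Longrightarrow> \<exists>f. approx \<Psi> W I K f \<and> (\<forall>x\<in>K. \<bar>f x - g x\<bar> \<le> e)"
  shows "approx \<Psi> W I K g"
  unfolding approx_def
proof (intro allI impI)
  fix e :: real assume e: "e > 0"
  obtain f where f: "approx \<Psi> W I K f" "\<forall>x\<in>K. \<bar>f x - g x\<bar> \<le> e/2"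
    using assms[of "e/2"] e by auto
  obtain s where s: "s \<in> N1 \<Psi> W I" "\<forall>x\<in>K. \<bar>s x - f x\<bar> \<le> e/2"
    using f(1) e unfolding approx_def by (meson half_gt_zero)
  have "\<forall>x\<in>K. \<bar>s x - g x\<bar> \<le> e"
  proof
    fix x assume "x \<in> K"
    then have "\<bar>s x - f x\<bar> \<le> e/2" "\<bar>f x - g x\<bar> \<le> e/2" using s f by auto
    then show "\<bar>s x - g x\<bar> \<le> e" by linarith
  qed
  then show "\<exists>s\<in>N1 \<Psi> W I. \<forall>x\<in>K. \<bar>s x - g x\<bar> \<le> e" using s(1) by blast
qed

lemma approx_sum:
  assumes "finite A" "\<And>i. i \<in> A \<Longrightarrow> approx \<Psi> W I K (f i)"
  shows "approx \<Psi> W I K (\<lambda>x. \<Sum>i\<in>A. f i x)"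
  using assms
proof (induction A rule: finite_induct)
  case empty
  then show ?case using approx_N1[OF N1_zero] by simp
next
  case (insert a A)
  have "approx \<Psi> W I K (\<lambda>x. 1 * f a x + 1 * (\<Sum>i\<in>A. f i x))"
    using insert by (intro approx_lin) auto
  then show ?case using insert by simp
qed


lemma pderiv_surj: "\<exists>q. pderiv q = (p::real poly)"
proof -
  define q where "q = (\<Sum>i\<le>degree p. monom (coeff p i / of_nat (Suc i)) (Suc i))"
  have "pderiv q = (pderiv ^^ 1) q" by simp
  also have "\<dots> = (\<Sum>i\<le>degree p. pderiv (monom (coeff p i / of_nat (Suc i)) (Suc i)))"
    unfolding q_def higher_pderiv_sum by simp
  also have "\<dots> = (\<Sum>i\<le>degree p. monom (coeff p i) i)"
    by (intro sum.cong refl) (simp add: pderiv_monom del: of_nat_Suc)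
  also have "\<dots> = p" by (rule poly_as_sum_of_monoms)
  finally show ?thesis by blast
qed

lemma smooth_on_deriv: "smooth_on I f \<Longrightarrow> smooth_on I (deriv f)"
  unfolding smooth_on_def
proof (intro allI ballI)
  fix k x assume "\<forall>k. \<forall>x\<in>I. (deriv ^^ k) f differentiable at x" "x \<in> I"
  then have "(deriv ^^ Suc k) f differentiable at x" by blast
  then show "(deriv ^^ k) (deriv f) differentiable at x" by (simp only: funpow_Suc_right o_apply)
qed

lemma zero_deriv_poly:
  assumes I: "open I" "is_interval I"
  shows "smooth_on I f \<Longrightarrow> (\<forall>x\<in>I. (deriv ^^ n) f x = 0) \<Longrightarrow> polynomial_on I f"
proof (induction n arbitrary: f)
  case 0
  then show ?case unfolding polynomial_on_def by (intro exI[of _ 0]) simp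
next
  case (Suc n)
  have "\<forall>x\<in>I. (deriv ^^ n) (deriv f) x = 0"
    using Suc.prems(2) by (simp only: funpow_Suc_right o_apply)
  then obtain p where p: "\<forall>x\<in>I. deriv f x = poly p x"
    using Suc.IH[OF smooth_on_deriv[OF Suc.prems(1)]] unfolding polynomial_on_def by blast
  obtain q where q: "pderiv q = p" using pderiv_surj by blast
  have "\<exists>c. \<forall>x\<in>I. f x - poly q x = c"
  proof (rule has_field_derivative_zero_constant)
    show "convex I" using I(2) by (simp add: is_interval_convex)
    fix x assume x: "x \<in> I"
    have "f differentiable at x" using Suc.prems(1) x unfolding smooth_on_def
      by (metis funpow_0)
    then have "(f has_field_derivative deriv f x) (at x)"
      by (simp add: DERIV_deriv_iff_real_differentiable)
    then have "(f has_field_derivative poly p x) (at x)" using p x by simp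
    moreover have "((\<lambda>x. poly q x) has_field_derivative poly p x) (at x)"
      using poly_DERIV[of q x] q by simp
    ultimately have "((\<lambda>x. f x - poly q x) has_field_derivative 0) (at x)"
      using DERIV_diff by fastforce
    then show "((\<lambda>x. f x - poly q x) has_field_derivative 0) (at x within I)"
      by (rule has_field_derivative_at_within)
  qed
  then obtain c where c: "\<forall>x\<in>I. f x - poly q x = c" by blast
  show ?case unfolding polynomial_on_def
    by (rule exI[of _ "q + [:c:]"]) (use c in \<open>auto simp: algebra_simps\<close>)
qed


lemma rpf_poly:
  "real_polynomial_function (g :: real \<Rightarrow> real) \<Longrightarrow> \<exists>p. \<forall>x. g x = poly p x"
proof (induction rule: real_polynomial_function.induct)
  case (linear f)
  then obtain c :: real where "f = (\<lambda>x. x * c)" using real_bounded_linear by blast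
  then have "f x = poly [:0, c:] x" for x by simp
  then show ?case by blast
next
  case (const c)
  then show ?case by (intro exI[of _ "[:c:]"]) simp
next
  case (add f g)
  then obtain p q where "\<forall>x. f x = poly p x" "\<forall>x. g x = poly q x" by blast
  then show ?case by (intro exI[of _ "p + q"]) simp
next
  case (mult f g)
  then obtain p q where "\<forall>x. f x = poly p x" "\<forall>x. g x = poly q x" by blast
  then show ?case by (intro exI[of _ "p * q"]) simp
qed

lemma deriv_step:
  assumes "smooth_on I \<Psi>" "x \<in> I"
  shows "((deriv ^^ k) \<Psi> has_field_derivative (deriv ^^ Suc k) \<Psi> x) (at x)"
proof -
  have "(deriv ^^ k) \<Psi> differentiable at x" using assms unfolding smooth_on_def by blast
  then show ?thesis by (simp add: DERIV_deriv_iff_real_differentiable)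
qed

lemma deriv_cont:
  assumes "smooth_on I \<Psi>" "L \<subseteq> I"
  shows "continuous_on L ((deriv ^^ k) \<Psi>)"
  using assms deriv_step[OF assms(1)]
  by (meson DERIV_isCont continuous_at_imp_continuous_on subsetD)


lemma aux_alg:
  fixes d a P Q x E :: real
  assumes "d \<noteq> 0"
  shows "(1/d)*(a*P) + (-1/d)*(a*Q) - x*a*E = a*((P - Q - (d*x)*E)/d)"
  using assms by (simp add: field_simps)

lemma main_step:
  assumes Wp: "\<forall>w\<in>W. w islimpt W" and Io: "open I" and sm: "smooth_on I \<Psi>"
  shows "compact K \<Longrightarrow> w0 \<in> W \<Longrightarrow> b \<in> I \<Longrightarrow> (\<forall>x\<in>K. w0*x+b \<in> I) \<Longrightarrow>
    approx \<Psi> W I K (\<lambda>x. x^k * (deriv ^^ k) \<Psi> (w0*x+b))"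
proof (induction k arbitrary: w0)
  case 0
  have "(\<lambda>x. \<Psi> (w0 * x + b)) \<in> N1 \<Psi> W I"
    unfolding N1_def
    by (rule CollectI, rule exI[of _ "1::nat"], rule exI[of _ "\<lambda>_. 1::real"], rule exI[of _ "\<lambda>_. w0"], rule exI[of _ "\<lambda>_. b"]) (use 0 in \<open>auto simp: card_lessThan\<close>)
  then show ?case by (simp add: approx_N1)
next
  case (Suc k)
  define D where "D = (deriv ^^ k) \<Psi>"
  define D' where "D' = (deriv ^^ Suc k) \<Psi>"
  define T where "T = (\<lambda>x. w0*x+b) ` K"
  have cT: "compact T" unfolding T_def
    by (intro compact_continuous_image Suc.prems(1) continuous_intros)
  have TI: "T \<subseteq> I" using Suc.prems(4) unfolding T_def by blast
  obtain \<delta> where \<delta>: "\<delta> > 0" "(\<Union>t\<in>T. cball t \<delta>) \<subseteq> I"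
    using compact_subset_open_imp_cball_epsilon_subset[OF cT Io TI] by blast
  define L where "L = {t + z | t z. t \<in> T \<and> z \<in> cball 0 \<delta>}"
  have cL: "compact L" unfolding L_def by (intro compact_sums cT compact_cball)
  have ballL: "cball t \<delta> \<subseteq> L" if "t \<in> T" for t
  proof
    fix y assume "y \<in> cball t \<delta>"
    then have "y - t \<in> cball 0 \<delta>" by (simp add: dist_norm)
    moreover have "y = t + (y - t)" by simp
    ultimately show "y \<in> L" unfolding L_def using that by blast
  qed
  have LI: "L \<subseteq> I"
  proof
    fix y assume "y \<in> L"
    then obtain t z where "y = t + z" "t \<in> T" "z \<in> cball 0 \<delta>" unfolding L_def by blast
    then have "y \<in> cball t \<delta>" by (simp add: dist_norm)
    then show "y \<in> I" using \<delta>(2) \<open>t \<in> T\<close> by blast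
  qed
  have uc: "uniformly_continuous_on L D'"
    unfolding D'_def by (intro compact_uniformly_continuous cL deriv_cont[OF sm LI])
  obtain R where R: "R > 0" "\<forall>x\<in>K. norm x \<le> R"
    using compact_imp_bounded[OF Suc.prems(1)] bounded_pos by blast
  show ?case unfolding D'_def[symmetric]
  proof (rule approx_limit)
    fix e :: real assume e: "e > 0"
    define \<epsilon> where "\<epsilon> = e / R ^ Suc k"
    have \<epsilon>: "\<epsilon> > 0" unfolding \<epsilon>_def using e R by simp
    obtain \<eta> where \<eta>: "\<eta> > 0" "\<forall>x\<in>L. \<forall>x'\<in>L. dist x' x < \<eta> \<longrightarrow> dist (D' x') (D' x) < \<epsilon>"
      using uc \<epsilon> unfolding uniformly_continuous_on_def by blast
    define \<rho> where "\<rho> = min (\<eta> / (2*R)) (\<delta> / R)"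
    have \<rho>: "\<rho> > 0" unfolding \<rho>_def using \<eta> \<delta> R by simp
    have \<rho>R: "\<rho> * R < \<eta>" "\<rho> * R \<le> \<delta>"
      unfolding \<rho>_def using R \<eta> \<delta> by (auto simp: min_def field_simps)
    obtain w where w: "w \<in> W" "w \<noteq> w0" "dist w w0 < \<rho>"
      using Wp Suc.prems(2) \<rho> unfolding islimpt_approachable by blast
    have hb: "\<bar>(w - w0) * x\<bar> < \<eta> \<and> \<bar>(w - w0) * x\<bar> \<le> \<delta>" if x: "x \<in> K" for x
    proof -
      have "\<bar>(w - w0) * x\<bar> = \<bar>w - w0\<bar> * \<bar>x\<bar>" by (simp add: abs_mult)
      also have "\<dots> \<le> \<rho> * R"
        using w(3) R x by (intro mult_mono) (auto simp: dist_real_def)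
      finally show ?thesis using \<rho>R by linarith
    qed
    have wI: "\<forall>x\<in>K. w*x+b \<in> I"
    proof
      fix x assume x: "x \<in> K"
      have "w0*x+b \<in> T" using x unfolding T_def by blast
      moreover have "w*x+b \<in> cball (w0*x+b) \<delta>"
        using hb[OF x] by (simp add: dist_real_def algebra_simps abs_minus_commute)
      ultimately show "w*x+b \<in> I" using \<delta>(2) by blast
    qed
    have A1: "approx \<Psi> W I K (\<lambda>x. x^k * D (w*x+b))"
      unfolding D_def by (rule Suc.IH[OF Suc.prems(1) w(1) Suc.prems(3) wI])
    have A0: "approx \<Psi> W I K (\<lambda>x. x^k * D (w0*x+b))"
      unfolding D_def by (rule Suc.IH[OF Suc.prems])
    define f where "f = (\<lambda>x. (1/(w-w0)) * (x^k * D (w*x+b)) + (-1/(w-w0)) * (x^k * D (w0*x+b)))"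
    have Af: "approx \<Psi> W I K f" unfolding f_def by (rule approx_lin[OF A1 A0])
    have "\<bar>f x - x ^ Suc k * D' (w0 * x + b)\<bar> \<le> e" if x: "x \<in> K" for x
    proof -
      define y0 where "y0 = w0*x+b"
      define h where "h = (w - w0) * x"
      have y0T: "y0 \<in> T" unfolding y0_def T_def using x by blast
      have hh: "\<bar>h\<bar> < \<eta>" "\<bar>h\<bar> \<le> \<delta>" using hb[OF x] unfolding h_def by auto
      define S where "S = cball y0 \<bar>h\<bar>"
      have SL: "S \<subseteq> L" unfolding S_def using ballL[OF y0T] hh(2) by auto
      have key: "norm ((D (y0+h) - (y0+h) * D' y0) - (D y0 - y0 * D' y0)) \<le> \<epsilon> * norm ((y0+h) - y0)"
      proof (rule field_differentiable_bound[of S _ "\<lambda>t. D' t - D' y0"])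
        show "convex S" unfolding S_def by simp
        fix z assume z: "z \<in> S"
        have "(D has_field_derivative D' z) (at z)"
          unfolding D_def D'_def using deriv_step[OF sm] z SL LI by blast
        then have "((\<lambda>t. D t - t * D' y0) has_field_derivative D' z - D' y0) (at z)"
          by (auto intro!: derivative_eq_intros)
        then show "((\<lambda>t. D t - t * D' y0) has_field_derivative D' z - D' y0) (at z within S)"
          by (rule has_field_derivative_at_within)
        have "z \<in> L" "y0 \<in> L" using z SL ballL[OF y0T] \<delta>(1) by auto
        moreover have "dist z y0 < \<eta>" using z hh unfolding S_def by (simp add: dist_commute)
        ultimately have "dist (D' z) (D' y0) < \<epsilon>" using \<eta>(2) by blast
        then show "norm (D' z - D' y0) \<le> \<epsilon>" by (simp add: dist_norm)
      next
        show "y0 + h \<in> S" "y0 \<in> S" unfolding S_def by (auto simp: dist_real_def)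
      qed
      then have key': "\<bar>D (y0+h) - D y0 - h * D' y0\<bar> \<le> \<epsilon> * \<bar>h\<bar>"
        by (simp add: algebra_simps)
      have wx: "w*x+b = y0 + h" unfolding y0_def h_def by (simp add: algebra_simps)
      have "f x - x ^ Suc k * D' (w0 * x + b) = (1/(w-w0))*(x^k*D(y0+h)) + (-1/(w-w0))*(x^k*D y0) - x*x^k*D' y0"
        unfolding f_def wx y0_def by simp
      also have "\<dots> = x^k * ((D (y0+h) - D y0 - h * D' y0) / (w - w0))"
        unfolding h_def by (rule aux_alg) (use w(2) in simp)
      finally have "f x - x ^ Suc k * D' (w0 * x + b) = x^k * ((D (y0+h) - D y0 - h * D' y0) / (w - w0))" .
      then have "\<bar>f x - x ^ Suc k * D' (w0 * x + b)\<bar> = \<bar>x\<bar>^k * (\<bar>D (y0+h) - D y0 - h * D' y0\<bar> / \<bar>w - w0\<bar>)"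
        by (simp add: abs_mult power_abs)
      also have "\<dots> \<le> \<bar>x\<bar>^k * (\<epsilon> * \<bar>h\<bar> / \<bar>w - w0\<bar>)"
        using key' by (intro mult_left_mono divide_right_mono) auto
      also have "\<epsilon> * \<bar>h\<bar> / \<bar>w - w0\<bar> = \<epsilon> * \<bar>x\<bar>"
        using w(2) unfolding h_def by (simp add: abs_mult)
      also have "\<bar>x\<bar>^k * (\<epsilon> * \<bar>x\<bar>) = \<epsilon> * \<bar>x\<bar> ^ Suc k" by simp
      also have "\<dots> \<le> \<epsilon> * R ^ Suc k"
        using R x \<epsilon> by (intro mult_left_mono power_mono) auto
      also have "\<dots> = e" unfolding \<epsilon>_def using R by simp
      finally show ?thesis .
    qed
    then show "\<exists>f. approx \<Psi> W I K f \<and> (\<forall>x\<in>K. \<bar>f x - x ^ Suc k * D' (w0 * x + b)\<bar> \<le> e)"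
      using Af by blast
  qed
qed


theorem lemma4p1p5:
  fixes W I :: "real set" and \<Psi> :: "real \<Rightarrow> real"
  assumes W_perfect: "\<forall>w\<in>W. w islimpt W"
    and zero_W: "0 \<in> W"
    and I_open: "open I" and I_interval: "is_interval I" and I_ne: "I \<noteq> {}"
    and smooth: "smooth_on I \<Psi>"
    and nonpoly: "\<not> polynomial_on I \<Psi>"
  shows "(\<forall>n::nat. \<forall>K. compact K \<and> K \<noteq> {} \<longrightarrow> (\<forall>e>0.
            \<exists>s\<in>N1 \<Psi> W I. unif_close_on K s (\<lambda>x. x ^ n) e))
       \<and> (\<forall>g. continuous_on UNIV g \<longrightarrow> (\<forall>K. compact K \<and> K \<noteq> {} \<longrightarrow> (\<forall>e>0.
            \<exists>s\<in>N1 \<Psi> W I. unif_close_on K s g e)))"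
proof -
  have mono: "approx \<Psi> W I K (\<lambda>x. x ^ n)" if K: "compact K" for K n
  proof -
    obtain b where b: "b \<in> I" "(deriv ^^ n) \<Psi> b \<noteq> 0"
      using zero_deriv_poly[OF I_open I_interval smooth] nonpoly by blast
    have "approx \<Psi> W I K (\<lambda>x. x^n * (deriv ^^ n) \<Psi> (0*x+b))"
      using main_step[OF W_perfect I_open smooth K zero_W b(1)] b(1) by simp
    then have "approx \<Psi> W I K (\<lambda>x. (1 / (deriv ^^ n) \<Psi> b) * (x^n * (deriv ^^ n) \<Psi> (0*x+b))
                 + 0 * (x^n * (deriv ^^ n) \<Psi> (0*x+b)))"
      by (intro approx_lin)
    moreover have "(\<lambda>x. (1 / (deriv ^^ n) \<Psi> b) * (x^n * (deriv ^^ n) \<Psi> (0*x+b))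
                 + 0 * (x^n * (deriv ^^ n) \<Psi> (0*x+b))) = (\<lambda>x. x ^ n)"
      using b(2) by (simp add: field_simps)
    ultimately show ?thesis by simp
  qed
  have close: "\<exists>s\<in>N1 \<Psi> W I. unif_close_on K s g e"
    if H: "approx \<Psi> W I K f" "\<forall>x\<in>K. \<bar>f x - g x\<bar> \<le> e/2" "e > 0" for K f g e
  proof -
    obtain s where s: "s \<in> N1 \<Psi> W I" "\<forall>x\<in>K. \<bar>s x - f x\<bar> \<le> e/4"
      using H(1,3) unfolding approx_def by (meson divide_pos_pos zero_less_numeral)
    have "\<forall>x\<in>K. \<bar>s x - g x\<bar> \<le> 3*e/4"
    proof
      fix x assume "x \<in> K"
      then have "\<bar>s x - f x\<bar> \<le> e/4" "\<bar>f x - g x\<bar> \<le> e/2" using s H by auto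
      then show "\<bar>s x - g x\<bar> \<le> 3*e/4" by linarith
    qed
    moreover have "3*e/4 < e" using H(3) by simp
    ultimately show ?thesis using s(1) unfolding unif_close_on_def by blast
  qed
  show ?thesis
  proof (intro conjI allI impI)
    fix n :: nat and K :: "real set" and e :: real
    assume "compact K \<and> K \<noteq> {}" "e > 0"
    then show "\<exists>s\<in>N1 \<Psi> W I. unif_close_on K s (\<lambda>x. x ^ n) e"
      using close[OF mono[of K n], of "\<lambda>x. x ^ n" e] by simp
  next
    fix g :: "real \<Rightarrow> real" and K :: "real set" and e :: real
    assume g: "continuous_on UNIV g" and K: "compact K \<and> K \<noteq> {}" and e: "e > 0"
    obtain p where p: "polynomial_function p" "\<forall>x\<in>K. norm (g x - p x) < e/2"
      using Stone_Weierstrass_polynomial_function[of K g "e/2"] g K e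
      by (meson continuous_on_subset half_gt_zero subset_UNIV)
    obtain P where P: "\<forall>x. p x = poly P x"
      using rpf_poly p(1) real_polynomial_function_eq by blast
    have "approx \<Psi> W I K (\<lambda>x. \<Sum>i\<le>degree P. coeff P i * x ^ i)"
    proof (rule approx_sum)
      fix i
      have "approx \<Psi> W I K (\<lambda>x. coeff P i * x ^ i + 0 * x ^ i)"
        using mono[of K i] K by (intro approx_lin) auto
      then show "approx \<Psi> W I K (\<lambda>x. coeff P i * x ^ i)" by simp
    qed simp
    moreover have "p = (\<lambda>x. \<Sum>i\<le>degree P. coeff P i * x ^ i)" using P by (auto simp: poly_altdef)
    ultimately have "approx \<Psi> W I K p" by simp
    moreover have "\<forall>x\<in>K. \<bar>p x - g x\<bar> \<le> e/2" using p(2)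
      by (metis abs_minus_commute less_eq_real_def real_norm_def)
    ultimately show "\<exists>s\<in>N1 \<Psi> W I. unif_close_on K s g e" using close e by blast
  qed
qed

end
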